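(* Let $u\in\widehat{\mathfrak{kv}}_2$, and let $f=\sum_{m\ge2}f_mx^m\in x^2k[[x]]$ be the unique series with $\mathrm{div}(u)=\mathrm{Tr}(f(x)-f(x+y)+f(y))$. Then $f$ is odd, and for each odd $m=3,5,\dots$ the map $u\mapsto f_m$ is a character of $\widehat{\mathfrak{kv}}_2$ (a linear map vanishing on $[\widehat{\mathfrak{kv}}_2,\widehat{\mathfrak{kv}}_2]$).
   Context: $k$ is a field of characteristic zero; $\mathfrak{lie}_2$, $\mathrm{Ass}_2$ are the degree completions of the free Lie and free associative algebras over $k$ on $x,y$. Each $a\in\mathrm{Ass}_2$ decomposes uniquely as $a=a_0+(\partial_xa)x+(\partial_ya)y$. $\mathfrak{tr}_n=\mathrm{Ass}_n^+/\langle ab-ba\rangle$ with projection $\mathrm{Tr}$; for $f=\sum f_mx^m$ without constant term, $\mathrm{Tr}(f(x))=\sum f_m\mathrm{Tr}(x^m)$ and similarly with $x$ replaced by $y$ or $x+y$. $\mathfrak{sder}_2$ is the Lie algebra of derivations $u$ of $\mathfrak{lie}_2$ with $u(x)=[x,a]$, $u(y)=[y,b]$ for some $a,b\in\mathfrak{lie}_2$ and $u(x+y)=0$; write $u=(a,b)$ normalized so that $a$ has no term $\lambda x$ and $b$ no term $\lambda y$. $\mathrm{div}(u)=\mathrm{Tr}(x\,\partial_xa+y\,\partial_yb)$. The differential $\delta:\mathfrak{tr}_2\to\mathfrak{tr}_3$ is $(\delta g)(x,y,z)=g(y,z)-g(x+y,z)+g(x,y+z)-g(x,y)$. $\widehat{\mathfrak{kv}}_2=\{u\in\mathfrak{sder}_2:\delta(\mathrm{div}(u))=0\}$,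 a Lie subalgebra; for $u$ in it there is a unique $f\in x^2k[[x]]$ as in the claim. *)

theory Defs
  imports Main
begin

datatype gen2 = X | Y
datatype gen3 = X3 | Y3 | Z3

instance gen2 :: finite
proof
  have "(UNIV :: gen2 set) = {X, Y}" using gen2.exhaust by auto
  then show "finite (UNIV :: gen2 set)" by (metis finite.emptyI finite_insert)
qed

instance gen3 :: finite
proof
  have "(UNIV :: gen3 set) = {X3, Y3, Z3}" using gen3.exhaust by auto
  then show "finite (UNIV :: gen3 set)" by (metis finite.emptyI finite_insert)
qed

section \<open>Degree-completed free associative algebra: coefficient functions on words\<close>

type_synonym ('a, 'k) ser = "'a list \<Rightarrow> 'k"

definition szero :: "('a, 'k::zero) ser" where "szero = (\<lambda>w. 0)"
definition sone :: "('a, 'k::{zero,one}) ser" where "sone = (\<lambda>w. if w = [] then 1 else 0)"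
definition gen :: "'a \<Rightarrow> ('a, 'k::{zero,one}) ser" where
  "gen l = (\<lambda>w. if w = [l] then 1 else 0)"
definition sadd :: "('a, 'k::plus) ser \<Rightarrow> ('a, 'k) ser \<Rightarrow> ('a, 'k) ser" where
  "sadd a b = (\<lambda>w. a w + b w)"
definition ssub :: "('a, 'k::minus) ser \<Rightarrow> ('a, 'k) ser \<Rightarrow> ('a, 'k) ser" where
  "ssub a b = (\<lambda>w. a w - b w)"
definition ssc :: "'k::times \<Rightarrow> ('a, 'k) ser \<Rightarrow> ('a, 'k) ser" where
  "ssc c a = (\<lambda>w. c * a w)"
definition smult :: "('a, 'k::comm_ring_1) ser \<Rightarrow> ('a, 'k) ser \<Rightarrow> ('a, 'k) ser" where
  "smult a b = (\<lambda>w. \<Sum>i\<le>length w. a (take i w) * b (drop i w))"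
definition br :: "('a, 'k::comm_ring_1) ser \<Rightarrow> ('a, 'k) ser \<Rightarrow> ('a, 'k) ser" where
  "br a b = ssub (smult a b) (smult b a)"

fun spow :: "('a, 'k::comm_ring_1) ser \<Rightarrow> nat \<Rightarrow> ('a, 'k) ser" where
  "spow s 0 = sone"
| "spow s (Suc n) = smult s (spow s n)"

definition hom :: "nat \<Rightarrow> ('a, 'k::zero) ser \<Rightarrow> ('a, 'k) ser" where
  "hom n a = (\<lambda>w. if length w = n then a w else 0)"

definition fin_supp :: "('a, 'k::zero) ser \<Rightarrow> bool" where
  "fin_supp a \<longleftrightarrow> finite {w. a w \<noteq> 0}"

section \<open>Free Lie algebra (Lie polynomials) and its degree completion\<close>

inductive_set lie_poly :: "('a, 'k::comm_ring_1) ser set" where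
  lp_gen: "gen l \<in> lie_poly"
| lp_add: "a \<in> lie_poly \<Longrightarrow> b \<in> lie_poly \<Longrightarrow> sadd a b \<in> lie_poly"
| lp_sc: "a \<in> lie_poly \<Longrightarrow> ssc c a \<in> lie_poly"
| lp_br: "a \<in> lie_poly \<Longrightarrow> b \<in> lie_poly \<Longrightarrow> br a b \<in> lie_poly"

definition lie_ser :: "('a, 'k::comm_ring_1) ser set" where
  "lie_ser = {a. \<forall>n. hom n a \<in> lie_poly}"

section \<open>Cyclic words: tr_n = Ass_n^+ / span of commutators (degree-wise)\<close>

inductive_set comm_span :: "('a, 'k::comm_ring_1) ser set" where
  cs_zero: "szero \<in> comm_span"
| cs_comm: "fin_supp p \<Longrightarrow> fin_supp q \<Longrightarrow> br p q \<in> comm_span"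
| cs_add: "a \<in> comm_span \<Longrightarrow> b \<in> comm_span \<Longrightarrow> sadd a b \<in> comm_span"
| cs_sc: "a \<in> comm_span \<Longrightarrow> ssc c a \<in> comm_span"

text \<open>tr_eq a b means Tr a = Tr b\<close>
definition tr_eq :: "('a, 'k::comm_ring_1) ser \<Rightarrow> ('a, 'k) ser \<Rightarrow> bool" where
  "tr_eq a b \<longleftrightarrow> (\<forall>n. hom n (ssub a b) \<in> comm_span)"

section \<open>Substitutions (continuous algebra homomorphisms on generators)\<close>

primrec wordimg :: "('a \<Rightarrow> ('b, 'k::comm_ring_1) ser) \<Rightarrow> 'a list \<Rightarrow> ('b, 'k) ser" where
  "wordimg \<sigma> [] = sone"
| "wordimg \<sigma> (l # w) = smult (\<sigma> l) (wordimg \<sigma> w)"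

text \<open>valid for substitutions sending generators to linear combinations of generators\<close>
definition subst :: "('a::finite \<Rightarrow> ('b, 'k::comm_ring_1) ser) \<Rightarrow> ('a, 'k) ser \<Rightarrow> ('b, 'k) ser" where
  "subst \<sigma> c = (\<lambda>v. \<Sum>w\<in>{w. length w \<le> length v}. c w * wordimg \<sigma> w v)"

definition delta :: "(gen2, 'k::comm_ring_1) ser \<Rightarrow> (gen3, 'k) ser" where
  "delta g =
     sadd (ssub (subst (\<lambda>l. case l of X \<Rightarrow> gen Y3 | Y \<Rightarrow> gen Z3) g)
                (subst (\<lambda>l. case l of X \<Rightarrow> sadd (gen X3) (gen Y3) | Y \<Rightarrow> gen Z3) g))
          (ssub (subst (\<lambda>l. case l of X \<Rightarrow> gen X3 | Y \<Rightarrow> sadd (gen Y3) (gen Z3)) g)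
                (subst (\<lambda>l. case l of X \<Rightarrow> gen X3 | Y \<Rightarrow> gen Y3) g))"

section \<open>Power series in one element: f(s) = sum_m f_m s^m (s without constant term)\<close>

definition sereval :: "(nat \<Rightarrow> 'k::comm_ring_1) \<Rightarrow> ('a, 'k) ser \<Rightarrow> ('a, 'k) ser" where
  "sereval F s = (\<lambda>w. \<Sum>m\<le>length w. F m * spow s m w)"

definition tfser :: "(nat \<Rightarrow> 'k::comm_ring_1) \<Rightarrow> (gen2, 'k) ser" where
  "tfser F = sadd (ssub (sereval F (gen X)) (sereval F (sadd (gen X) (gen Y)))) (sereval F (gen Y))"

type_synonym 'k sd = "(gen2, 'k) ser \<times> (gen2, 'k) ser"

definition sder2 :: "'k::comm_ring_1 sd set" where
  "sder2 = {(a, b). a \<in> lie_ser \<and> b \<in> lie_ser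
              \<and> sadd (br (gen X) a) (br (gen Y) b) = szero
              \<and> a [X] = 0 \<and> b [Y] = 0}"

text \<open>partial derivative: a = a_0 + (pd X a) x + (pd Y a) y\<close>
definition pd :: "'a \<Rightarrow> ('a, 'k) ser \<Rightarrow> ('a, 'k) ser" where
  "pd l a = (\<lambda>w. a (w @ [l]))"

text \<open>representative of div(u) = Tr(x pd_x a + y pd_y b)\<close>
definition divg :: "'k::comm_ring_1 sd \<Rightarrow> (gen2, 'k) ser" where
  "divg u = sadd (smult (gen X) (pd X (fst u))) (smult (gen Y) (pd Y (snd u)))"

definition kv2 :: "'k::comm_ring_1 sd set" where
  "kv2 = {u \<in> sder2. tr_eq (delta (divg u)) szero}"

text \<open>values of the derivation on generators, and its continuous extension to the algebra\<close>
definition dvec :: "'k::comm_ring_1 sd \<Rightarrow> gen2 \<Rightarrow> (gen2, 'k) ser" where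
  "dvec u l = (case l of X \<Rightarrow> br (gen X) (fst u) | Y \<Rightarrow> br (gen Y) (snd u))"

definition der :: "('a::finite \<Rightarrow> ('a, 'k::comm_ring_1) ser) \<Rightarrow> ('a, 'k) ser \<Rightarrow> ('a, 'k) ser" where
  "der D c = (\<lambda>v. \<Sum>i\<le>length v. \<Sum>j\<in>{i..length v}. \<Sum>l\<in>UNIV.
                 c (take i v @ [l] @ drop j v) * D l (drop i (take j v)))"

definition is_bracket :: "'k::comm_ring_1 sd \<Rightarrow> 'k sd \<Rightarrow> 'k sd \<Rightarrow> bool" where
  "is_bracket w u v \<longleftrightarrow>
     (\<forall>l. dvec w l = ssub (der (dvec u) (dvec v l)) (der (dvec v) (dvec u l)))"

definition padd :: "'k::comm_ring_1 sd \<Rightarrow> 'k sd \<Rightarrow> 'k sd" where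
  "padd u v = (sadd (fst u) (fst v), sadd (snd u) (snd v))"
definition psc :: "'k::comm_ring_1 \<Rightarrow> 'k sd \<Rightarrow> 'k sd" where
  "psc c u = (ssc c (fst u), ssc c (snd u))"

end

theory Submission
  imports Defs
begin


lemma smult_gen_left:
  "smult (gen l) s w = (if w \<noteq> [] \<and> hd w = l then s (tl w) else (0::'k::comm_ring_1))"
proof -
  have "smult (gen l) s w = (\<Sum>i\<le>length w. if i = 1 then (if w \<noteq> [] \<and> hd w = l then s (tl w) else 0) else 0)"
    unfolding smult_def
  proof (rule sum.cong[OF refl])
    fix i assume i: "i \<in> {..length w}"
    show "gen l (take i w) * s (drop i w) = (if i = 1 then (if w \<noteq> [] \<and> hd w = l then s (tl w) else 0) else 0)"
    proof (cases "i = 1")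
      case True then show ?thesis by (cases w) (auto simp: gen_def)
    next
      case False
      have "take i w \<noteq> [l]"
      proof
        assume "take i w = [l]"
        then have "length (take i w) = 1" by simp
        with i False show False by auto
      qed
      with False show ?thesis by (simp add: gen_def)
    qed
  qed
  also have "\<dots> = (if w \<noteq> [] \<and> hd w = l then s (tl w) else 0)"
    by (cases w) (auto simp: sum.delta Suc_le_eq)
  finally show ?thesis .
qed

lemma smult_gen_right:
  "smult s (gen l) w = (if w \<noteq> [] \<and> last w = l then s (butlast w) else (0::'k::comm_ring_1))"
proof -
  have "smult s (gen l) w = (\<Sum>i\<le>length w. if i = length w - 1 then (if w \<noteq> [] \<and> last w = l then s (butlast w) else 0) else 0)"
    unfolding smult_def
  proof (rule sum.cong[OF refl])
    fix i assume i: "i \<in> {..length w}"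
    show "s (take i w) * gen l (drop i w) = (if i = length w - 1 then (if w \<noteq> [] \<and> last w = l then s (butlast w) else 0) else 0)"
    proof (cases "i = length w - 1 \<and> w \<noteq> []")
      case True
      then have "drop i w = drop (length (butlast w)) (butlast w @ [last w])" by simp
      then have "drop i w = [last w]" by simp
      moreover have "take i w = butlast w" using True by (simp add: butlast_conv_take)
      ultimately show ?thesis using True by (auto simp: gen_def)
    next
      case False
      have "drop i w \<noteq> [l]"
      proof
        assume "drop i w = [l]"
        then have "length (drop i w) = 1" by simp
        with i False show False by auto
      qed
      with False show ?thesis by (auto simp: gen_def)
    qed
  qed
  also have "\<dots> = (if w \<noteq> [] \<and> last w = l then s (butlast w) else 0)"
    by (cases "w = []") (auto simp: sum.delta)
  finally show ?thesis .
qed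

lemma br_gen:
  "br (gen l) e w = (if w \<noteq> [] \<and> hd w = l then e (tl w) else (0::'k::comm_ring_1))
                  - (if w \<noteq> [] \<and> last w = l then e (butlast w) else 0)"
  by (simp add: br_def ssub_def smult_gen_left smult_gen_right)



lemma sum_reflect_nat: "(\<Sum>i\<le>(n::nat). g i) = (\<Sum>i\<le>n. g (n - i))"
  by (rule sum.reindex_bij_witness[where i="\<lambda>i. n - i" and j="\<lambda>i. n - i"]) auto

lemma br_rep: "br p q (replicate k l) = (0::'k::comm_ring_1)"
proof -
  have "smult p q (replicate k l) = (\<Sum>i\<le>k. p (replicate i l) * q (replicate (k - i) l))"
    unfolding smult_def by (rule sum.cong) auto
  also have "\<dots> = (\<Sum>i\<le>k. p (replicate (k - i) l) * q (replicate (k - (k - i)) l))"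
    by (rule sum_reflect_nat)
  also have "\<dots> = (\<Sum>i\<le>k. q (replicate i l) * p (replicate (k - i) l))"
    by (rule sum.cong) (auto simp: mult.commute)
  also have "\<dots> = smult q p (replicate k l)"
    unfolding smult_def by (rule sum.cong) auto
  finally show ?thesis by (simp add: br_def ssub_def)
qed

lemma lie_poly_nil: "p \<in> lie_poly \<Longrightarrow> p [] = (0::'k::comm_ring_1)"
  by (induction rule: lie_poly.induct) (auto simp: gen_def sadd_def ssc_def br_def ssub_def smult_def)

lemma lie_poly_rep: "p \<in> lie_poly \<Longrightarrow> 2 \<le> k \<Longrightarrow> p (replicate k l) = (0::'k::comm_ring_1)"
proof (induction rule: lie_poly.induct)
  case (lp_gen l')
  then show ?case by (auto simp: gen_def dest: arg_cong[where f=length])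
next
  case (lp_br a b)
  then show ?case by (simp add: br_rep)
qed (auto simp: sadd_def ssc_def)

lemma smult_rev:
  assumes p: "\<And>w. p (rev w) = (-1)^(length w + 1) * p w"
    and q: "\<And>w. q (rev w) = (-1)^(length w + 1) * q w"
  shows "smult p q (rev w) = (-1)^(length w) * smult q p (w::'a list) "
proof -
  let ?n = "length w"
  have "smult p q (rev w) = (\<Sum>i\<le>?n. p (rev (drop (?n - i) w)) * q (rev (take (?n - i) w)))"
    unfolding smult_def by (simp add: take_rev drop_rev)
  also have "\<dots> = (\<Sum>i\<le>?n. p (rev (drop (?n - (?n - i)) w)) * q (rev (take (?n - (?n - i)) w)))"
    by (rule sum_reflect_nat)
  also have "\<dots> = (\<Sum>i\<le>?n. (-1)^?n * (q (take i w) * p (drop i w)))"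
  proof (rule sum.cong[OF refl])
    fix i assume i: "i \<in> {..?n}"
    then have e: "?n - (?n - i) = i" by auto
    have "p (rev (drop i w)) * q (rev (take i w)) = ((-1)^(?n - i + 1) * (-1)^(i + 1)) * (q (take i w) * p (drop i w))"
      using i by (simp add: p q algebra_simps min_absorb2)
    also have "(-1)^(?n - i + 1) * (-1)^(i + 1) = ((-1)^?n :: 'b)"
    proof -
      have "(-1)^(?n - i + 1) * (-1)^(i + 1) = ((-1)^(?n - i + 1 + (i + 1)) :: 'b)" by (simp add: power_add)
      also have "?n - i + 1 + (i + 1) = ?n + 2" using i by auto
      finally show ?thesis by simp
    qed
    finally show "p (rev (drop (?n - (?n - i)) w)) * q (rev (take (?n - (?n - i)) w)) = (-1)^?n * (q (take i w) * p (drop i w))"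
      by (simp add: e)
  qed
  also have "\<dots> = (-1)^?n * smult q p w"
    unfolding smult_def by (simp add: sum_distrib_left)
  finally show ?thesis .
qed

lemma lie_poly_rev: "p \<in> lie_poly \<Longrightarrow> p (rev w) = (-1)^(length w + 1) * (p w :: 'k::comm_ring_1)"
proof (induction arbitrary: w rule: lie_poly.induct)
  case (lp_gen l)
  show ?case
  proof (cases "w = [l]")
    case True then show ?thesis by (simp add: gen_def)
  next
    case False
    then have "rev w \<noteq> [l]" by (metis rev_rev_ident rev_singleton_conv)
    with False show ?thesis by (simp add: gen_def)
  qed
next
  case (lp_add a b)
  then show ?case by (simp add: sadd_def algebra_simps)
next
  case (lp_sc a c)
  then show ?case by (simp add: ssc_def algebra_simps)
next
  case (lp_br a b)
  have "br a b (rev w) = (-1)^(length w) * smult b a w - (-1)^(length w) * smult a b w"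
    unfolding br_def ssub_def using smult_rev[of a b w] smult_rev[of b a w] lp_br.IH by simp
  then show ?case by (simp add: br_def ssub_def algebra_simps)
qed

lemma lie_ser_eval: "a w = hom (length w) a w"
  by (auto simp: hom_def)
lemma lie_ser_hom: "a \<in> lie_ser \<Longrightarrow> hom n a \<in> lie_poly"
  by (auto simp: lie_ser_def)

lemma lie_ser_nil: "a \<in> lie_ser \<Longrightarrow> a [] = (0::'k::comm_ring_1)"
proof -
  assume "a \<in> lie_ser"
  hence "hom 0 a \<in> lie_poly" by (rule lie_ser_hom)
  hence "hom 0 a [] = 0" by (rule lie_poly_nil)
  thus ?thesis by (simp add: hom_def)
qed

lemma lie_ser_rep: "a \<in> lie_ser \<Longrightarrow> 2 \<le> k \<Longrightarrow> a (replicate k l) = (0::'k::comm_ring_1)"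
  using lie_ser_eval[of a "replicate k l"] lie_ser_hom[of a k] lie_poly_rep by (metis length_replicate)

lemma lie_ser_rev: "a \<in> lie_ser \<Longrightarrow> a (rev w) = (-1)^(length w + 1) * (a w :: 'k::comm_ring_1)"
proof -
  assume a: "a \<in> lie_ser"
  have "a (rev w) = hom (length w) a (rev w)" using lie_ser_eval[of a "rev w"] by simp
  also have "\<dots> = (-1)^(length w + 1) * hom (length w) a w" by (rule lie_poly_rev[OF lie_ser_hom[OF a]])
  also have "hom (length w) a w = a w" by (simp add: hom_def)
  finally show ?thesis .
qed



lemma sder2_D: "u \<in> sder2 \<Longrightarrow> fst u \<in> lie_ser \<and> snd u \<in> lie_ser \<and> fst u [X] = 0 \<and> snd u [Y] = 0
   \<and> (\<forall>w. br (gen X) (fst u) w + br (gen Y) (snd u) w = (0::'k::comm_ring_1))"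
  unfolding sder2_def by (auto simp: sadd_def szero_def fun_eq_iff)

lemma sder_pt: "u \<in> sder2 \<Longrightarrow> br (gen X) (fst u) w + br (gen Y) (snd u) w = (0::'k::comm_ring_1)"
  using sder2_D by blast

lemma sder_E1: "(u::'k::comm_ring_1 sd) \<in> sder2 \<Longrightarrow> fst u (replicate k X @ [Y]) = snd u (replicate (Suc k) X)"
  using sder_pt[of u "replicate (Suc k) X @ [Y]"]
  by (simp add: br_gen butlast_append)

lemma sder_E2: "(u::'k::comm_ring_1 sd) \<in> sder2 \<Longrightarrow>
   fst u (replicate p X @ Y # replicate (Suc q) X) = fst u (replicate (Suc p) X @ Y # replicate q X)"
proof -
  assume u: "u \<in> sder2"
  let ?w1 = "X # (replicate p X @ Y # replicate (Suc q) X)"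
  let ?w2 = "(replicate (Suc p) X @ Y # replicate q X) @ [X]"
  have eq: "?w1 = ?w2" by (simp add: replicate_append_same)
  have "br (gen X) (fst u) ?w1 + br (gen Y) (snd u) ?w1 = 0" by (rule sder_pt[OF u])
  then have "br (gen X) (fst u) ?w1 + br (gen Y) (snd u) ?w2 = 0" by (simp only: eq)
  then have "(fst u (replicate p X @ Y # replicate (Suc q) X) - (if last ?w1 = X then fst u (butlast ?w1) else 0))
     + (0 - (if last ?w2 = Y then snd u (butlast ?w2) else 0)) = 0"
    by (simp only: br_gen) simp
  then have "fst u (replicate p X @ Y # replicate (Suc q) X) - (if last ?w2 = X then fst u (butlast ?w2) else 0) = 0"
    by (simp only: eq) simp
  then show ?thesis by (simp only: butlast_snoc last_snoc) simp
qed

lemma sder_E3: "(u::'k::comm_ring_1 sd) \<in> sder2 \<Longrightarrow>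
   snd u (replicate (Suc k) X @ [Y]) = snd u (Y # replicate (Suc k) X)"
  using sder_pt[of u "Y # replicate (Suc k) X @ [Y]"]
  by (simp add: br_gen butlast_append)

lemma sder_beta: "(u::'k::comm_ring_1 sd) \<in> sder2 \<Longrightarrow> snd u (replicate t X) = (if t = 1 then snd u [X] else 0)"
proof -
  assume u: "u \<in> sder2"
  then have b: "snd u \<in> lie_ser" using sder2_D by blast
  show ?thesis
  proof (cases "t = 0")
    case True then show ?thesis using lie_ser_nil[OF b] by simp
  next
    case False
    show ?thesis
    proof (cases "t = 1")
      case True then show ?thesis by simp
    next
      case False
      with \<open>t \<noteq> 0\<close> have "2 \<le> t" by simp
      then show ?thesis using lie_ser_rep[OF b] False by simp
    qed
  qed
qed

lemma sder_a_one_y: "(u::'k::comm_ring_1 sd) \<in> sder2 \<Longrightarrow>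
   fst u (replicate j X @ Y # replicate k X) = fst u (replicate (j + k) X @ [Y])"
proof (induction k arbitrary: j)
  case 0 then show ?case by simp
next
  case (Suc k)
  have "fst u (replicate j X @ Y # replicate (Suc k) X) = fst u (replicate (Suc j) X @ Y # replicate k X)"
    by (rule sder_E2[OF Suc.prems])
  also have "\<dots> = fst u (replicate (Suc j + k) X @ [Y])" by (rule Suc.IH[OF Suc.prems])
  finally show ?case by simp
qed

lemma sder_a_zero: "(u::'k::comm_ring_1 sd) \<in> sder2 \<Longrightarrow> 1 \<le> j + k \<Longrightarrow>
   fst u (replicate j X @ Y # replicate k X) = 0"
proof -
  assume u: "u \<in> sder2" and jk: "1 \<le> j + k"
  have "fst u (replicate j X @ Y # replicate k X) = fst u (replicate (j + k) X @ [Y])"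
    by (rule sder_a_one_y[OF u])
  also have "\<dots> = snd u (replicate (Suc (j + k)) X)" by (rule sder_E1[OF u])
  also have "\<dots> = (if Suc (j+k) = 1 then snd u [X] else 0)" by (rule sder_beta[OF u])
  also have "\<dots> = 0" using jk by auto
  finally show ?thesis .
qed

lemma sder_even: "(u::'k::field_char_0 sd) \<in> sder2 \<Longrightarrow> even m \<Longrightarrow> 2 \<le> m \<Longrightarrow>
   snd u (replicate (m - 1) X @ [Y]) = 0"
proof -
  assume u: "u \<in> sder2" and m: "even m" "2 \<le> m"
  obtain k where k: "m - 1 = Suc k" using m by (cases "m - 1") auto
  have b: "snd u \<in> lie_ser" using sder2_D[OF u] by blast
  have "snd u (rev (replicate (Suc k) X @ [Y])) = (-1)^(Suc (Suc k) + 1) * snd u (replicate (Suc k) X @ [Y])"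
    using lie_ser_rev[OF b, of "replicate (Suc k) X @ [Y]"] by simp
  moreover have "rev (replicate (Suc k) X @ [Y]) = Y # replicate (Suc k) X" by (simp del: replicate.simps replicate_Suc)
  moreover have "odd (Suc (Suc k) + 1)" using m k by presburger
  ultimately have "snd u (Y # replicate (Suc k) X) = - snd u (replicate (Suc k) X @ [Y])" by simp
  with sder_E3[OF u, of k] have "snd u (replicate (Suc k) X @ [Y]) = 0" by simp
  with k show ?thesis by simp
qed



definition S1 :: "nat \<Rightarrow> gen2 list set" where
  "S1 m = {w. length w = m \<and> length (filter (\<lambda>c. c = Y) w) = 1}"

definition Lf :: "nat \<Rightarrow> (gen2, 'k::comm_ring_1) ser \<Rightarrow> 'k" where
  "Lf m a = (\<Sum>w\<in>S1 m. a w)"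

lemma finite_S1: "finite (S1 m)"
proof -
  have "S1 m \<subseteq> {w. set w \<subseteq> UNIV \<and> length w = m}" by (auto simp: S1_def)
  moreover have "finite {w::gen2 list. set w \<subseteq> UNIV \<and> length w = m}"
    by (rule finite_lists_length_eq) simp
  ultimately show ?thesis by (rule finite_subset)
qed

lemma S1_rot: "s @ t \<in> S1 m \<Longrightarrow> t @ s \<in> S1 m"
  by (auto simp: S1_def)

lemma sum_split_pairs:
  fixes g :: "gen2 list \<Rightarrow> gen2 list \<Rightarrow> 'k::comm_ring_1"
  shows "(\<Sum>w\<in>S1 m. \<Sum>i\<le>length w. g (take i w) (drop i w)) = (\<Sum>st\<in>{(s,t). s @ t \<in> S1 m}. g (fst st) (snd st))"
proof -
  have "(\<Sum>w\<in>S1 m. \<Sum>i\<le>length w. g (take i w) (drop i w)) = (\<Sum>wi\<in>Sigma (S1 m) (\<lambda>w. {..length w}). g (take (snd wi) (fst wi)) (drop (snd wi) (fst wi)))"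
    by (subst sum.Sigma) (simp_all add: finite_S1 split_def)
  also have "\<dots> = (\<Sum>st\<in>{(s,t). s @ t \<in> S1 m}. g (fst st) (snd st))"
    by (rule sum.reindex_bij_witness[where i="\<lambda>(s,t). (s @ t, length s)" and j="\<lambda>(w,i). (take i w, drop i w)"])
       (auto simp: min_absorb2)
  finally show ?thesis .
qed

lemma Lf_br: "Lf m (br p q) = (0::'k::comm_ring_1)"
proof -
  let ?T = "{(s,t). s @ t \<in> S1 m}"
  have "Lf m (br p q) = (\<Sum>w\<in>S1 m. \<Sum>i\<le>length w. p (take i w) * q (drop i w)) - (\<Sum>w\<in>S1 m. \<Sum>i\<le>length w. q (take i w) * p (drop i w))"
    by (simp add: Lf_def br_def ssub_def smult_def sum_subtractf)
  also have "\<dots> = (\<Sum>st\<in>?T. p (fst st) * q (snd st)) - (\<Sum>st\<in>?T. q (fst st) * p (snd st))"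
    by (simp only: sum_split_pairs[of "\<lambda>s t. p s * q t"] sum_split_pairs[of "\<lambda>s t. q s * p t"])
  also have "(\<Sum>st\<in>?T. q (fst st) * p (snd st)) = (\<Sum>st\<in>?T. p (fst st) * q (snd st))"
    by (rule sum.reindex_bij_witness[where i="\<lambda>(s,t). (t,s)" and j="\<lambda>(s,t). (t,s)"])
       (auto simp: S1_rot mult.commute)
  finally show ?thesis by simp
qed

lemma Lf_add: "Lf m (sadd a b) = Lf m a + Lf m b"
  by (simp add: Lf_def sadd_def sum.distrib)
lemma Lf_sub: "Lf m (ssub a b) = Lf m a - Lf m b"
  by (simp add: Lf_def ssub_def sum_subtractf)
lemma Lf_sc: "Lf m (ssc c a) = c * Lf m a"
  by (simp add: Lf_def ssc_def sum_distrib_left)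
lemma Lf_zero: "Lf m szero = 0"
  by (simp add: Lf_def szero_def)
lemma Lf_hom: "Lf m (hom m a) = Lf m a"
  by (auto simp: Lf_def hom_def S1_def intro!: sum.cong)

lemma Lf_comm_span: "c \<in> comm_span \<Longrightarrow> Lf m c = 0"
  by (induction rule: comm_span.induct) (simp_all add: Lf_zero Lf_br Lf_add Lf_sc)

lemma Lf_tr_eq: "tr_eq a b \<Longrightarrow> Lf m a = Lf m b"
proof -
  assume "tr_eq a b"
  then have "hom m (ssub a b) \<in> comm_span" by (simp add: tr_eq_def)
  then have "Lf m (hom m (ssub a b)) = 0" by (rule Lf_comm_span)
  then show ?thesis by (simp add: Lf_hom Lf_sub)
qed

definition wj :: "nat \<Rightarrow> nat \<Rightarrow> gen2 list" where
  "wj m j = replicate j X @ Y # replicate (m - 1 - j) X"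

lemma filter_rep_X: "filter (\<lambda>c. c = Y) (replicate k X) = []"
  by (induction k) auto

lemma S1_enum: "1 \<le> m \<Longrightarrow> S1 m = wj m ` {..<m}"
proof
  assume m: "1 \<le> m"
  show "wj m ` {..<m} \<subseteq> S1 m" using m by (auto simp: wj_def S1_def filter_rep_X)
  show "S1 m \<subseteq> wj m ` {..<m}"
  proof
    fix w assume w: "w \<in> S1 m"
    let ?j = "length (takeWhile (\<lambda>c. c \<noteq> Y) w)"
    have allX: "\<And>v. filter (\<lambda>c. c = Y) v = [] \<Longrightarrow> v = replicate (length v) X"
    proof -
      fix v :: "gen2 list" assume "filter (\<lambda>c. c = Y) v = []"
      then have "\<forall>c\<in>set v. c \<noteq> Y" by (simp add: filter_empty_conv)
      then have "\<forall>c\<in>set v. c = X" using gen2.exhaust by blast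
      then show "v = replicate (length v) X" by (simp add: replicate_length_same)
    qed
    have t: "takeWhile (\<lambda>c. c \<noteq> Y) w = replicate ?j X"
      by (rule allX) (auto simp: filter_empty_conv dest: set_takeWhileD)
    have "filter (\<lambda>c. c = Y) w \<noteq> []" using w by (auto simp: S1_def)
    then have Yw: "Y \<in> set w" by (auto simp: filter_empty_conv)
    then have ne: "dropWhile (\<lambda>c. c \<noteq> Y) w \<noteq> []" by (auto simp: dropWhile_eq_Nil_conv)
    then have hdY: "hd (dropWhile (\<lambda>c. c \<noteq> Y) w) = Y" using hd_dropWhile[OF ne] by simp
    obtain r where d: "dropWhile (\<lambda>c. c \<noteq> Y) w = Y # r"
      using ne hdY by (cases "dropWhile (\<lambda>c. c \<noteq> Y) w") auto
    have wsplit0: "w = replicate ?j X @ Y # r" using takeWhile_dropWhile_id[of "\<lambda>c. c \<noteq> Y" w] t d by simp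
    obtain j where wsplit: "w = replicate j X @ Y # r" using wsplit0 by blast
    have f1: "length (filter (\<lambda>c. c = Y) w) = 1" using w by (simp add: S1_def)
    then have "length (filter (\<lambda>c. c = Y) r) = 0" using wsplit by (simp add: filter_rep_X)
    then have rr: "r = replicate (length r) X" using allX by simp
    have lw: "length w = m" using w by (simp add: S1_def)
    have lw2: "length w = j + Suc (length r)" using wsplit by simp
    have "length r = m - 1 - j" using lw lw2 by linarith
    then have "w = wj m j" using wsplit rr by (simp add: wj_def)
    moreover have "j < m" using lw lw2 by linarith
    ultimately show "w \<in> wj m ` {..<m}" by blast
  qed
qed

lemma takeWhile_rep: "takeWhile (\<lambda>c. c \<noteq> Y) (replicate k X @ Y # r) = replicate k X"
  by (induction k) auto

lemma wj_inj: "inj_on (wj m) {..<m}"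
proof
  fix i j assume "i \<in> {..<m}" "j \<in> {..<m}" "wj m i = wj m j"
  then have "takeWhile (\<lambda>c. c \<noteq> Y) (wj m i) = takeWhile (\<lambda>c. c \<noteq> Y) (wj m j)" by simp
  moreover have "\<And>k. takeWhile (\<lambda>c. c \<noteq> Y) (wj m k) = replicate k X"
    by (simp add: wj_def takeWhile_rep)
  ultimately show "i = j" by simp
qed

lemma Lf_enum: "1 \<le> m \<Longrightarrow> Lf m a = (\<Sum>j<m. a (wj m j))"
  by (simp add: Lf_def S1_enum sum.reindex[OF wj_inj])



lemma smult_sadd_left: "smult (sadd e1 e2) s w = smult e1 s w + smult e2 s (w::'a list) "
  by (simp add: smult_def sadd_def sum.distrib distrib_right)

lemma spow_gen: "spow (gen l) k w = (if w = replicate k l then 1 else (0::'k::comm_ring_1))"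
proof (induction k arbitrary: w)
  case 0 then show ?case by (simp add: sone_def)
next
  case (Suc k)
  show ?case by (cases w) (auto simp: smult_gen_left Suc.IH)
qed

lemma spow_xy: "spow (sadd (gen X) (gen Y)) k w = (if length w = k then 1 else (0::'k::comm_ring_1))"
proof (induction k arbitrary: w)
  case 0 then show ?case by (simp add: sone_def)
next
  case (Suc k)
  show ?case
  proof (cases w)
    case Nil then show ?thesis by (simp add: smult_sadd_left smult_gen_left)
  next
    case (Cons c w')
    then show ?thesis by (cases c) (auto simp: smult_sadd_left smult_gen_left Suc.IH)
  qed
qed

lemma sereval_gen_zero: "(\<And>k. w \<noteq> replicate k l) \<Longrightarrow> sereval G (gen l) w = (0::'k::comm_ring_1)"
  by (simp add: sereval_def spow_gen)

lemma sereval_xy: "sereval G (sadd (gen X) (gen Y)) w = (G (length w) :: 'k::comm_ring_1)"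
proof -
  have "sereval G (sadd (gen X) (gen Y)) w = (\<Sum>k\<le>length w. if k = length w then G k else 0)"
    unfolding sereval_def by (rule sum.cong) (auto simp: spow_xy)
  then show ?thesis by simp
qed

lemma wj_notX: "wj m j \<noteq> replicate k X"
proof
  assume "wj m j = replicate k X"
  then have "Y \<in> set (replicate k X)" by (metis wj_def in_set_conv_decomp)
  then show False by (simp split: if_splits)
qed

lemma wj_notY: "2 \<le> m \<Longrightarrow> j < m \<Longrightarrow> wj m j \<noteq> replicate k Y"
proof
  assume m: "2 \<le> m" "j < m" and e: "wj m j = replicate k Y"
  have "X \<in> set (wj m j)"
  proof (cases j)
    case 0 then show ?thesis using m by (cases "m - 1") (auto simp: wj_def)
  next
    case (Suc j') then show ?thesis by (simp add: wj_def)
  qed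
  with e show False by (simp split: if_splits)
qed

lemma length_wj: "j < m \<Longrightarrow> length (wj m j) = m"
  by (simp add: wj_def)

lemma tfser_eval: "tfser G w = sereval G (gen X) w - sereval G (sadd (gen X) (gen Y)) w + sereval G (gen Y) w"
  by (simp add: tfser_def sadd_def ssub_def)

lemma Lf_tfser: "2 \<le> m \<Longrightarrow> Lf m (tfser G) = - (of_nat m * (G m :: 'k::comm_ring_1))"
proof -
  assume m: "2 \<le> m"
  have "Lf m (tfser G) = (\<Sum>j<m. tfser G (wj m j))" using m by (simp add: Lf_enum)
  also have "\<dots> = (\<Sum>j<m. - G m)"
  proof (rule sum.cong[OF refl])
    fix j assume j: "j \<in> {..<m}"
    show "tfser G (wj m j) = - G m"
      unfolding tfser_eval
      using j m by (simp add: sereval_xy length_wj sereval_gen_zero wj_notX wj_notY)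
  qed
  finally show ?thesis by simp
qed

lemma divg_eval: "divg u w = (if w \<noteq> [] \<and> hd w = X then fst u (tl w @ [X]) else 0)
   + (if w \<noteq> [] \<and> hd w = Y then snd u (tl w @ [Y]) else (0::'k::comm_ring_1))"
  by (simp add: divg_def sadd_def smult_gen_left pd_def)

lemma Lf_divg: "(u::'k::comm_ring_1 sd) \<in> sder2 \<Longrightarrow> 2 \<le> m \<Longrightarrow> Lf m (divg u) = snd u (replicate (m - 1) X @ [Y])"
proof -
  assume u: "u \<in> sder2" and m: "2 \<le> m"
  obtain n where n: "m = Suc n" using m by (cases m) auto
  have "Lf m (divg u) = (\<Sum>j<Suc n. divg u (wj m j))" using m n by (simp add: Lf_enum)
  also have "\<dots> = divg u (wj m 0) + (\<Sum>j<n. divg u (wj m (Suc j)))" by (rule sum.lessThan_Suc_shift)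
  also have "(\<Sum>j<n. divg u (wj m (Suc j))) = 0"
  proof (rule sum.neutral, rule ballI)
    fix j assume j: "j \<in> {..<n}"
    have "divg u (wj m (Suc j)) = fst u (replicate j X @ Y # replicate (m - 1 - Suc j) X @ [X])"
      by (simp add: divg_eval wj_def)
    also have "replicate (m - 1 - Suc j) X @ [X] = replicate (m - 1 - j) X"
    proof -
      have "m - 1 - j = Suc (m - 1 - Suc j)" using j n by auto
      then show ?thesis by (simp add: replicate_append_same)
    qed
    also have "fst u (replicate j X @ Y # replicate (m - 1 - j) X) = 0"
      by (rule sder_a_zero[OF u]) (use j n m in auto)
    finally show "divg u (wj m (Suc j)) = 0" .
  qed
  also have "divg u (wj m 0) = snd u (replicate (m - 1) X @ [Y])"
    by (simp add: divg_eval wj_def)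
  finally show ?thesis by simp
qed




lemma hom_sadd: "hom n (sadd a b) = sadd (hom n a) (hom n (b::('a,'k::comm_ring_1) ser))"
  by (auto simp: hom_def sadd_def fun_eq_iff)
lemma hom_ssc: "hom n (ssc c a) = ssc c (hom n (a::('a,'k::comm_ring_1) ser))"
  by (auto simp: hom_def ssc_def fun_eq_iff)
lemma hom_ssub_szero: "hom n (ssub a szero) = hom n (a::('a,'k::comm_ring_1) ser)"
  by (auto simp: hom_def ssub_def szero_def fun_eq_iff)

lemma lie_ser_add: "a \<in> lie_ser \<Longrightarrow> b \<in> lie_ser \<Longrightarrow> sadd a b \<in> (lie_ser :: ('a,'k::comm_ring_1) ser set)"
  by (auto simp: lie_ser_def hom_sadd intro: lie_poly.lp_add)
lemma lie_ser_sc: "a \<in> lie_ser \<Longrightarrow> ssc c a \<in> (lie_ser :: ('a,'k::comm_ring_1) ser set)"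
  by (auto simp: lie_ser_def hom_ssc intro: lie_poly.lp_sc)

lemma sder2_I: "a \<in> lie_ser \<Longrightarrow> b \<in> lie_ser \<Longrightarrow> a [X] = 0 \<Longrightarrow> b [Y] = 0 \<Longrightarrow>
   (\<forall>w. br (gen X) a w + br (gen Y) b w = (0::'k::comm_ring_1)) \<Longrightarrow> (a, b) \<in> sder2"
  unfolding sder2_def by (auto simp: sadd_def szero_def fun_eq_iff)

lemma sder2_padd: "u \<in> sder2 \<Longrightarrow> v \<in> sder2 \<Longrightarrow> padd u v \<in> (sder2 :: 'k::comm_ring_1 sd set)"
proof -
  assume u: "u \<in> sder2" and v: "v \<in> sder2"
  note U = sder2_D[OF u] and V = sder2_D[OF v]
  show ?thesis unfolding padd_def
  proof (rule sder2_I)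
    show "\<forall>w. br (gen X) (sadd (fst u) (fst v)) w + br (gen Y) (sadd (snd u) (snd v)) w = 0"
    proof
      fix w
      have "br (gen X) (sadd (fst u) (fst v)) w + br (gen Y) (sadd (snd u) (snd v)) w
         = (br (gen X) (fst u) w + br (gen Y) (snd u) w) + (br (gen X) (fst v) w + br (gen Y) (snd v) w)"
        by (simp add: br_gen sadd_def algebra_simps)
      then show "br (gen X) (sadd (fst u) (fst v)) w + br (gen Y) (sadd (snd u) (snd v)) w = 0"
        using U V by simp
    qed
    show "sadd (fst u) (fst v) \<in> lie_ser" using U V by (simp add: lie_ser_add)
    show "sadd (snd u) (snd v) \<in> lie_ser" using U V by (simp add: lie_ser_add)
    show "sadd (fst u) (fst v) [X] = 0" using U V by (simp add: sadd_def)
    show "sadd (snd u) (snd v) [Y] = 0" using U V by (simp add: sadd_def)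
  qed
qed

lemma sder2_psc: "u \<in> sder2 \<Longrightarrow> psc c u \<in> (sder2 :: 'k::comm_ring_1 sd set)"
proof -
  assume u: "u \<in> sder2"
  note U = sder2_D[OF u]
  show ?thesis unfolding psc_def
  proof (rule sder2_I)
    show "\<forall>w. br (gen X) (ssc c (fst u)) w + br (gen Y) (ssc c (snd u)) w = 0"
    proof
      fix w
      have "br (gen X) (ssc c (fst u)) w + br (gen Y) (ssc c (snd u)) w
         = c * (br (gen X) (fst u) w + br (gen Y) (snd u) w)"
        by (simp add: br_gen ssc_def algebra_simps)
      then show "br (gen X) (ssc c (fst u)) w + br (gen Y) (ssc c (snd u)) w = 0"
        using U by simp
    qed
    show "ssc c (fst u) \<in> lie_ser" using U by (simp add: lie_ser_sc)
    show "ssc c (snd u) \<in> lie_ser" using U by (simp add: lie_ser_sc)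
    show "ssc c (fst u) [X] = 0" using U by (simp add: ssc_def)
    show "ssc c (snd u) [Y] = 0" using U by (simp add: ssc_def)
  qed
qed

lemma divg_padd: "divg (padd u v) = sadd (divg u) (divg (v::'k::comm_ring_1 sd))"
  by (auto simp: fun_eq_iff divg_eval padd_def sadd_def)
lemma divg_psc: "divg (psc c u) = ssc c (divg (u::'k::comm_ring_1 sd))"
  by (auto simp: fun_eq_iff divg_eval psc_def ssc_def)

lemma subst_sadd: "subst \<sigma> (sadd c d) = sadd (subst \<sigma> c) (subst \<sigma> d)"
  by (simp add: fun_eq_iff subst_def sadd_def distrib_right sum.distrib)
lemma subst_ssc: "subst \<sigma> (ssc k c) = ssc k (subst \<sigma> c)"
  by (simp add: fun_eq_iff subst_def ssc_def sum_distrib_left mult.assoc)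

lemma lin4: "sadd (ssub (sadd a1 b1) (sadd a2 b2)) (ssub (sadd a3 b3) (sadd a4 b4))
   = sadd (sadd (ssub a1 a2) (ssub a3 a4)) (sadd (ssub b1 b2) (ssub b3 (b4::('a,'k::comm_ring_1) ser)))"
  by (simp add: fun_eq_iff sadd_def ssub_def algebra_simps)
lemma lin4c: "sadd (ssub (ssc c a1) (ssc c a2)) (ssub (ssc c a3) (ssc c a4))
   = ssc c (sadd (ssub a1 a2) (ssub a3 (a4::('a,'k::comm_ring_1) ser)))"
  by (simp add: fun_eq_iff sadd_def ssub_def ssc_def algebra_simps)

lemma delta_sadd: "delta (sadd g h) = sadd (delta g) (delta (h::(gen2,'k::comm_ring_1) ser))"
  unfolding delta_def subst_sadd by (rule lin4)
lemma delta_ssc: "delta (ssc c g) = ssc c (delta (g::(gen2,'k::comm_ring_1) ser))"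
  unfolding delta_def subst_ssc by (rule lin4c)

lemma tr_eq_zero_add: "tr_eq A szero \<Longrightarrow> tr_eq B szero \<Longrightarrow> tr_eq (sadd A B) (szero::('a,'k::comm_ring_1) ser)"
  unfolding tr_eq_def hom_ssub_szero hom_sadd by (auto intro: comm_span.cs_add)
lemma tr_eq_zero_sc: "tr_eq A szero \<Longrightarrow> tr_eq (ssc c A) (szero::('a,'k::comm_ring_1) ser)"
  unfolding tr_eq_def hom_ssub_szero hom_ssc by (auto intro: comm_span.cs_sc)

lemma kv2_D: "u \<in> kv2 \<Longrightarrow> u \<in> sder2 \<and> tr_eq (delta (divg u)) szero"
  by (simp add: kv2_def)

lemma kv2_padd: "u \<in> kv2 \<Longrightarrow> v \<in> kv2 \<Longrightarrow> padd u v \<in> (kv2 :: 'k::comm_ring_1 sd set)"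
  unfolding kv2_def by (auto simp: sder2_padd divg_padd delta_sadd intro: tr_eq_zero_add)

lemma kv2_psc: "u \<in> kv2 \<Longrightarrow> psc c u \<in> (kv2 :: 'k::comm_ring_1 sd set)"
  unfolding kv2_def by (auto simp: sder2_psc divg_psc delta_ssc intro: tr_eq_zero_sc)



lemma sum_gen2: "(\<Sum>l\<in>UNIV. f l) = f X + (f Y :: 'k::comm_ring_1)"
proof -
  have U: "(UNIV :: gen2 set) = {X, Y}" using gen2.exhaust by auto
  have "sum f UNIV = sum f {X, Y}" by (simp only: U)
  also have "\<dots> = f X + f Y" by simp
  finally show ?thesis .
qed

lemma br_gen_repX: "br (gen l) e (replicate k X) = (0::'k::comm_ring_1)"
proof (cases k)
  case 0 then show ?thesis by (simp add: br_gen)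
next
  case (Suc k')
  have "replicate (Suc k') X = replicate k' X @ [X]" by (simp add: replicate_append_same)
  then have "butlast (replicate (Suc k') X) = replicate k' X" by simp
  then show ?thesis using Suc by (simp add: br_gen)
qed

lemma br_gen_Y: "br (gen l) e [Y] = (0::'k::comm_ring_1)"
  by (simp add: br_gen)

lemma brY_rXY: "br (gen Y) e (replicate i X @ [X, Y]) = - (e (replicate (Suc i) X) :: 'k::comm_ring_1)"
proof -
  have "hd (replicate i X @ [X, Y]) = X" by (cases i) auto
  moreover have "butlast (replicate i X @ [X, Y]) = replicate (Suc i) X"
    by (simp add: butlast_append replicate_append_same)
  ultimately show ?thesis by (simp add: br_gen)
qed

lemma brY_rYY: "e [Y] = (0::'k::comm_ring_1) \<Longrightarrow> br (gen Y) e (replicate i X @ [Y, Y]) = - e (replicate i X @ [Y])"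
proof -
  assume e: "e [Y] = 0"
  have "butlast (replicate i X @ [Y, Y]) = replicate i X @ [Y]"
    by (simp add: butlast_append)
  then show ?thesis using e by (cases i) (auto simp: br_gen)
qed

lemma brY_rY: "e [] = (0::'k::comm_ring_1) \<Longrightarrow> br (gen Y) e (replicate i X @ [Y]) = - e (replicate i X)"
  by (cases i) (auto simp: br_gen)

lemma brX_rY: "br (gen X) e (replicate k X @ [Y]) = (if k = 0 then 0 else (e (replicate (k - 1) X @ [Y]) :: 'k::comm_ring_1))"
  by (cases k) (auto simp: br_gen)

lemma dvec_X: "dvec u X = br (gen X) (fst u)" by (simp add: dvec_def)
lemma dvec_Y: "dvec u Y = br (gen Y) (snd u)" by (simp add: dvec_def)

lemma der_key:
  fixes u v :: "'k::comm_ring_1 sd"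
  assumes u: "u \<in> sder2" and v: "v \<in> sder2" and p: "2 \<le> p"
  shows "der (dvec u) (dvec v Y) (replicate p X @ [Y, Y])
       = snd v (replicate (p - 1) X @ [Y]) * snd u [X] + snd v [X] * snd u (replicate (p - 1) X @ [Y])"
proof -
  define W where "W = replicate p X @ [Y, Y]"
  define T where "T i j = (\<Sum>l\<in>UNIV. dvec v Y (take i W @ [l] @ drop j W) * dvec u l (drop i (take j W)))" for i j
  have lenW: "length W = Suc (Suc p)" by (simp add: W_def)
  have Dz: "\<And>l k. dvec u l (replicate k X) = 0"
    by (simp add: dvec_def br_gen_repX split: gen2.split)
  have DY: "\<And>l. dvec u l [Y] = 0"
    by (simp add: dvec_def br_gen_Y split: gen2.split)
  have Tz: "\<And>i j. j \<le> p \<Longrightarrow> T i j = 0"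
  proof -
    fix i j assume j: "j \<le> p"
    have "drop i (take j W) = replicate (j - i) X" using j by (simp add: W_def)
    then show "T i j = 0" by (simp add: T_def Dz)
  qed
  have T1: "\<And>i. Suc p \<le> i \<Longrightarrow> T i (Suc p) = 0"
  proof -
    fix i assume i: "Suc p \<le> i"
    have "drop i (take (Suc p) W) = replicate 0 X" using i by (simp add: W_def)
    then show "T i (Suc p) = 0" by (simp only: T_def Dz) simp
  qed
  have T2: "\<And>i. Suc p \<le> i \<Longrightarrow> T i (Suc (Suc p)) = 0"
  proof -
    fix i assume i: "Suc p \<le> i"
    show "T i (Suc (Suc p)) = 0"
    proof (cases "i = Suc p")
      case True
      have "drop i (take (Suc (Suc p)) W) = [Y]" using True by (simp add: W_def)
      then show ?thesis by (simp only: T_def DY) simp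
    next
      case False
      have "drop i (take (Suc (Suc p)) W) = replicate 0 X" using i False by (simp add: W_def)
      then show ?thesis by (simp only: T_def Dz) simp
    qed
  qed
  have inner: "\<And>i. i \<le> Suc (Suc p) \<Longrightarrow> (\<Sum>j\<in>{i..Suc (Suc p)}. T i j)
      = (if i \<le> Suc p then T i (Suc p) else 0) + T i (Suc (Suc p))"
  proof -
    fix i assume i: "i \<le> Suc (Suc p)"
    have "(\<Sum>j\<in>{i..Suc (Suc p)}. T i j) = (\<Sum>j\<in>{i..Suc (Suc p)}. (if j = Suc p then T i j else 0) + (if j = Suc (Suc p) then T i j else 0))"
    proof (rule sum.cong[OF refl])
      fix j assume j: "j \<in> {i..Suc (Suc p)}"
      show "T i j = (if j = Suc p then T i j else 0) + (if j = Suc (Suc p) then T i j else 0)"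
      proof (cases "j \<le> p")
        case True then show ?thesis using Tz by simp
      next
        case False then have "j = Suc p \<or> j = Suc (Suc p)" using j by auto
        then show ?thesis by auto
      qed
    qed
    also have "\<dots> = (if i \<le> Suc p then T i (Suc p) else 0) + T i (Suc (Suc p))"
      using i by (simp add: sum.distrib)
    finally show "(\<Sum>j\<in>{i..Suc (Suc p)}. T i j) = (if i \<le> Suc p then T i (Suc p) else 0) + T i (Suc (Suc p))" .
  qed
  have "der (dvec u) (dvec v Y) W = (\<Sum>i\<le>Suc (Suc p). \<Sum>j\<in>{i..Suc (Suc p)}. T i j)"
    unfolding der_def T_def lenW by simp
  also have "\<dots> = (\<Sum>i\<le>Suc (Suc p). (if i \<le> Suc p then T i (Suc p) else 0) + T i (Suc (Suc p)))"
    by (rule sum.cong[OF refl], rule inner, simp)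
  also have "\<dots> = (\<Sum>i\<le>p. T i (Suc p) + T i (Suc (Suc p)))"
    by (simp add: T1 T2)
  also have "\<dots> = (\<Sum>i\<le>p. (if i = p - 1 then snd v (replicate i X @ [Y]) * snd u [X] else 0)
                        + (if i = 1 then snd v [X] * snd u (replicate (p - i) X @ [Y]) else 0))"
  proof (rule sum.cong[OF refl])
    fix i assume i: "i \<in> {..p}"
    then have ip: "i \<le> p" by simp
    have tk: "take i W = replicate i X" using ip by (simp add: W_def)
    have dr1: "drop (Suc p) W = [Y]" by (simp add: W_def)
    have dr2: "drop (Suc (Suc p)) W = []" by (simp add: W_def)
    have tdr1: "drop i (take (Suc p) W) = replicate (p - i) X @ [Y]" using ip by (simp add: W_def)
    have tdr2: "drop i (take (Suc (Suc p)) W) = replicate (p - i) X @ [Y, Y]" using ip by (simp add: W_def)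
    have bu: "snd u \<in> lie_ser" "snd u [Y] = 0" using sder2_D[OF u] by auto
    have bv: "snd v \<in> lie_ser" "snd v [Y] = 0" using sder2_D[OF v] by auto
    have "T i (Suc p) = - snd v (replicate (Suc i) X) * (if p - i = 0 then 0 else fst u (replicate (p - i - 1) X @ [Y]))
          + (- snd v (replicate i X @ [Y])) * (- snd u (replicate (p - i) X))"
      unfolding T_def sum_gen2 tk dr1 tdr1
      by (simp add: dvec_X dvec_Y brY_rXY brY_rYY brX_rY brY_rY bv bu lie_ser_nil)
    also have "\<dots> = (if i = p - 1 then snd v (replicate i X @ [Y]) * snd u [X] else 0)"
    proof -
      have z: "snd v (replicate (Suc i) X) * (if p - i = 0 then 0 else fst u (replicate (p - i - 1) X @ [Y])) = 0"
      proof (cases "i = 0")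
        case True
        have "fst u (replicate (p - 1) X @ Y # replicate 0 X) = 0"
          by (rule sder_a_zero[OF u]) (use p in auto)
        then show ?thesis using True by simp
      next
        case False
        have "snd v (replicate (Suc i) X) = (if Suc i = 1 then snd v [X] else 0)" by (rule sder_beta[OF v])
        then show ?thesis using False by simp
      qed
      have "snd u (replicate (p - i) X) = (if p - i = 1 then snd u [X] else 0)" by (rule sder_beta[OF u])
      moreover have "(p - i = 1) = (i = p - 1)" using ip p by auto
      ultimately show ?thesis using z by (simp add: algebra_simps)
    qed
    finally have A: "T i (Suc p) = (if i = p - 1 then snd v (replicate i X @ [Y]) * snd u [X] else 0)" .
    have "T i (Suc (Suc p)) = dvec v Y (replicate i X @ [X]) * dvec u X (replicate (p - i) X @ [Y, Y])
          + (- snd v (replicate i X)) * (- snd u (replicate (p - i) X @ [Y]))"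
      unfolding T_def sum_gen2 tk dr2 tdr2
      by (simp add: dvec_Y brY_rYY brY_rY bv bu lie_ser_nil)
    also have "dvec v Y (replicate i X @ [X]) = 0"
      using br_gen_repX[of Y "snd v" "Suc i"] by (simp add: dvec_Y replicate_append_same)
    also have "snd v (replicate i X) = (if i = 1 then snd v [X] else 0)" by (rule sder_beta[OF v])
    finally have B: "T i (Suc (Suc p)) = (if i = 1 then snd v [X] * snd u (replicate (p - i) X @ [Y]) else 0)"
      by simp
    show "T i (Suc p) + T i (Suc (Suc p)) = (if i = p - 1 then snd v (replicate i X @ [Y]) * snd u [X] else 0)
                        + (if i = 1 then snd v [X] * snd u (replicate (p - i) X @ [Y]) else 0)"
      using A B by simp
  qed
  also have "\<dots> = snd v (replicate (p - 1) X @ [Y]) * snd u [X] + snd v [X] * snd u (replicate (p - 1) X @ [Y])"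
    using p by (simp add: sum.distrib)
  finally show ?thesis by (simp add: W_def)
qed


lemma F_formula:
  fixes F :: "'k::field_char_0 sd \<Rightarrow> nat \<Rightarrow> 'k" and u :: "'k sd"
  assumes f_def: "\<forall>u\<in>kv2. F u 0 = 0 \<and> F u 1 = 0 \<and> tr_eq (divg u) (tfser (F u))"
    and u: "u \<in> kv2" and m: "2 \<le> m"
  shows "F u m = - snd u (replicate (m - 1) X @ [Y]) / of_nat m"
proof -
  have us: "u \<in> sder2" using kv2_D[OF u] by blast
  have "tr_eq (divg u) (tfser (F u))" using f_def u by blast
  then have "Lf m (divg u) = Lf m (tfser (F u))" by (rule Lf_tr_eq)
  then have "snd u (replicate (m - 1) X @ [Y]) = - (of_nat m * F u m)"
    using Lf_divg[OF us m] Lf_tfser[OF m] by simp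
  moreover have "(of_nat m :: 'k) \<noteq> 0" using m by simp
  ultimately show ?thesis by (simp add: field_simps)
qed

theorem proposition4p4:
  fixes F :: "'k::field_char_0 sd \<Rightarrow> nat \<Rightarrow> 'k"
  assumes f_def: "\<forall>u\<in>kv2. F u 0 = 0 \<and> F u 1 = 0 \<and> tr_eq (divg u) (tfser (F u))"
  shows "(\<forall>u\<in>kv2. \<forall>m. even m \<longrightarrow> F u m = 0)
       \<and> (\<forall>m. odd m \<and> 3 \<le> m \<longrightarrow>
            (\<forall>u\<in>kv2. \<forall>v\<in>kv2. F (padd u v) m = F u m + F v m)
          \<and> (\<forall>u\<in>kv2. \<forall>c. F (psc c u) m = c * F u m)
          \<and> (\<forall>u\<in>kv2. \<forall>v\<in>kv2. \<forall>w\<in>kv2. is_bracket w u v \<longrightarrow> F w m = 0))"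
proof (intro conjI allI ballI impI)
  fix u :: "'k sd" and m :: nat assume u: "u \<in> kv2" and ev: "even m"
  show "F u m = 0"
  proof (cases "m = 0")
    case True then show ?thesis using f_def u by simp
  next
    case False
    with ev have m: "2 \<le> m" by presburger
    have us: "u \<in> sder2" using kv2_D[OF u] by blast
    show ?thesis using F_formula[OF f_def u m] sder_even[OF us ev m] by simp
  qed
next
  fix m :: nat and u v :: "'k sd" assume mo: "odd m \<and> 3 \<le> m" and u: "u \<in> kv2" and v: "v \<in> kv2"
  then have m: "2 \<le> m" by simp
  have "F (padd u v) m = - snd (padd u v) (replicate (m - 1) X @ [Y]) / of_nat m"
    by (rule F_formula[OF f_def kv2_padd[OF u v] m])
  also have "\<dots> = - (snd u (replicate (m - 1) X @ [Y]) + snd v (replicate (m - 1) X @ [Y])) / of_nat m"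
    by (simp add: padd_def sadd_def)
  also have "\<dots> = F u m + F v m"
  proof -
    have "(of_nat m :: 'k) \<noteq> 0" using m by simp
    then show ?thesis using F_formula[OF f_def u m] F_formula[OF f_def v m] by (simp add: field_simps)
  qed
  finally show "F (padd u v) m = F u m + F v m" .
next
  fix m :: nat and u :: "'k sd" and c :: 'k assume mo: "odd m \<and> 3 \<le> m" and u: "u \<in> kv2"
  then have m: "2 \<le> m" by simp
  have "F (psc c u) m = - snd (psc c u) (replicate (m - 1) X @ [Y]) / of_nat m"
    by (rule F_formula[OF f_def kv2_psc[OF u] m])
  also have "\<dots> = c * F u m"
    using F_formula[OF f_def u m] by (simp add: psc_def ssc_def)
  finally show "F (psc c u) m = c * F u m" .
next
  fix m :: nat and u v w :: "'k sd" assume mo: "odd m \<and> 3 \<le> m" and u: "u \<in> kv2" and v: "v \<in> kv2" and w: "w \<in> kv2"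
    and b: "is_bracket w u v"
  then have m: "2 \<le> m" and p: "2 \<le> m - 1" by auto
  have us: "u \<in> sder2" and vs: "v \<in> sder2" and ws: "w \<in> sder2" using kv2_D u v w by blast+
  have wY: "snd w [Y] = 0" using sder2_D[OF ws] by blast
  have "dvec w Y = ssub (der (dvec u) (dvec v Y)) (der (dvec v) (dvec u Y))"
    using b by (simp add: is_bracket_def)
  then have "dvec w Y (replicate (m - 1) X @ [Y, Y])
     = der (dvec u) (dvec v Y) (replicate (m - 1) X @ [Y, Y]) - der (dvec v) (dvec u Y) (replicate (m - 1) X @ [Y, Y])"
    by (simp add: ssub_def)
  also have "\<dots> = 0"
    using der_key[OF us vs p] der_key[OF vs us p] by (simp add: algebra_simps)
  finally have "snd w (replicate (m - 1) X @ [Y]) = 0"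
    using brY_rYY[of "snd w" "m - 1", OF wY] by (simp add: dvec_Y)
  then show "F w m = 0" using F_formula[OF f_def w m] by simp
qed


end
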